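(* Let $C$ be a linear completely regular $[n,k,2]_q$ code with covering radius $\rho=1$ and $k<n-1$, let $n_a$ be the number of codewords at distance one from any vector not in $C$, and let $X_1,\dots,X_{n/n_a}$ be a partition of $\{1,\dots,n\}$ into sets of size $n_a$ such that every weight-2 codeword of $C$ has support contained in one of the $X_i$. For each $i$, let $D_i$ be the code obtained by taking the codewords of $C$ whose supports are contained in $X_i$ and deleting the coordinate positions outside $X_i$. Then $D_i$ is a linear completely regular code of length $n_a$, dimension $n_a-1$, minimum distance $2$ and covering radius $1$, and (for a suitable ordering of the coordinates in $X_i$) it has a generator matrix $G_i=[I\,|\,{\bf h}]$ where $I$ is the $(n_a-1)\times(n_a-1)$ identity matrix and ${\bf h}$ is a column vector of weight $n_a-1$.
   Context: Hamming distance; support of a vector = set of its nonzero coordinates; covering radius $\rho=\max_{\bf v}\min_{{\bf x}\in C}d({\bf v},{\bf x})$. $C$ is completely regular if for every vector ${\bf x}$, with $t=d({\bf x},C)$, the number of codewords at distance $i$ from ${\bf x}$ depends only on $t$ and $i$. *)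

theory Defs
  imports Complex_Main "HOL-Library.Function_Algebras"
begin

text \<open>Vectors over a finite field 'a are functions nat => 'a; a code of length n
  lives on a finite coordinate set I (e.g. {..<n}) and its vectors vanish outside I.\<close>

definition fscale :: "'a::field \<Rightarrow> (nat \<Rightarrow> 'a) \<Rightarrow> (nat \<Rightarrow> 'a)" where
  "fscale c v = (\<lambda>j. c * v j)"

definition vecs :: "nat set \<Rightarrow> (nat \<Rightarrow> 'a::zero) set" where
  "vecs I = {v. \<forall>j. j \<notin> I \<longrightarrow> v j = 0}"

definition hdist :: "(nat \<Rightarrow> 'a) \<Rightarrow> (nat \<Rightarrow> 'a) \<Rightarrow> nat" where
  "hdist u v = card {j. u j \<noteq> v j}"

definition supp :: "(nat \<Rightarrow> 'a::zero) \<Rightarrow> nat set" where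
  "supp v = {j. v j \<noteq> 0}"

definition wt :: "(nat \<Rightarrow> 'a::zero) \<Rightarrow> nat" where
  "wt v = card (supp v)"

definition linear_code :: "nat set \<Rightarrow> (nat \<Rightarrow> 'a::field) set \<Rightarrow> bool" where
  "linear_code I C \<longleftrightarrow> C \<subseteq> vecs I \<and> module.subspace fscale C"

definition code_dim :: "(nat \<Rightarrow> 'a::field) set \<Rightarrow> nat" where
  "code_dim C = vector_space.dim fscale C"

definition min_dist :: "(nat \<Rightarrow> 'a) set \<Rightarrow> nat" where
  "min_dist C = Min {hdist x y | x y. x \<in> C \<and> y \<in> C \<and> x \<noteq> y}"

definition dist_to :: "(nat \<Rightarrow> 'a) \<Rightarrow> (nat \<Rightarrow> 'a) set \<Rightarrow> nat" where
  "dist_to v C = Min (hdist v ` C)"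

definition cov_radius :: "nat set \<Rightarrow> (nat \<Rightarrow> 'a::zero) set \<Rightarrow> nat" where
  "cov_radius I C = Max ((\<lambda>v. dist_to v C) ` vecs I)"

definition completely_regular :: "nat set \<Rightarrow> (nat \<Rightarrow> 'a::zero) set \<Rightarrow> bool" where
  "completely_regular I C \<longleftrightarrow>
     (\<forall>x\<in>vecs I. \<forall>y\<in>vecs I. dist_to x C = dist_to y C \<longrightarrow>
        (\<forall>i. card {c\<in>C. hdist x c = i} = card {c\<in>C. hdist y c = i}))"

text \<open>Codewords with support inside X, with the coordinates outside X deleted
  (i.e. the code is regarded as a code on the coordinate set X).\<close>
definition shortened :: "(nat \<Rightarrow> 'a::zero) set \<Rightarrow> nat set \<Rightarrow> (nat \<Rightarrow> 'a) set" where
  "shortened C X = (\<lambda>c. \<lambda>j. if j \<in> X then c j else 0) ` {c\<in>C. supp c \<subseteq> X}"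

end

theory Submission
  imports Defs "HOL-Library.FuncSet"
begin



lemma fscale_apply[simp]: "fscale c v j = c * v j" by (simp add: fscale_def)

lemma fun_sum_apply: "(sum F A) (p::nat) = (\<Sum>r\<in>A. (F r p :: 'a::comm_monoid_add))"
  by (induction A rule: infinite_finite_induct) auto

lemma vs: "vector_space (fscale :: 'a::field \<Rightarrow> _)"
  by unfold_locales (auto simp: fscale_def fun_eq_iff algebra_simps)

lemma finite_vecs: "finite I \<Longrightarrow> finite (vecs I :: (nat \<Rightarrow> 'a::{zero,finite}) set)"
proof -
  assume "finite I"
  have "vecs I \<subseteq> (\<lambda>f j. if j \<in> I then f j else 0) ` (Pi\<^sub>E I (\<lambda>_. (UNIV::'a set)))"
  proof
    fix v :: "nat \<Rightarrow> 'a" assume "v \<in> vecs I"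
    then have "v = (\<lambda>j. if j \<in> I then restrict v I j else 0)" by (intro ext) (auto simp: vecs_def)
    then show "v \<in> (\<lambda>f j. if j \<in> I then f j else 0) ` (Pi\<^sub>E I (\<lambda>_. UNIV))"
      by (rule image_eqI[where x="restrict v I"]) auto
  qed
  then show ?thesis by (rule finite_subset) (use \<open>finite I\<close> in \<open>auto intro!: finite_imageI finite_PiE\<close>)
qed

lemma hdist_fin: "u \<in> vecs I \<Longrightarrow> v \<in> vecs I \<Longrightarrow> {j. u j \<noteq> v j} \<subseteq> I"
  unfolding vecs_def by auto (metis)

lemma hdist_0_iff: "finite I \<Longrightarrow> u \<in> vecs I \<Longrightarrow> v \<in> vecs I \<Longrightarrow> hdist u v = 0 \<longleftrightarrow> u = v"
  unfolding hdist_def using hdist_fin[of u I v] by (auto simp: fun_eq_iff dest: finite_subset)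

lemma hdist_le: "finite I \<Longrightarrow> u \<in> vecs I \<Longrightarrow> v \<in> vecs I \<Longrightarrow> hdist u v \<le> card I"
  unfolding hdist_def using card_mono hdist_fin by metis



global_interpretation V: vector_space "fscale :: 'a::field \<Rightarrow> (nat \<Rightarrow> 'a) \<Rightarrow> (nat \<Rightarrow> 'a)" by (rule vs)

lemma "module.subspace fscale (C::(nat\<Rightarrow>'a::field) set) \<Longrightarrow> x \<in> C \<Longrightarrow> y \<in> C \<Longrightarrow> x - y \<in> C"
  by (rule V.subspace_diff)
lemma "module.span fscale (C::(nat\<Rightarrow>'a::field) set) = V.span C" by simp



definition nbr :: "(nat \<Rightarrow> 'a::zero) set \<Rightarrow> nat \<Rightarrow> nat set" where
  "nbr C j = {i. i \<noteq> j \<and> (\<exists>c\<in>C. supp c = {i,j})}"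

lemma supp_fscale: "(a::'a::field) \<noteq> 0 \<Longrightarrow> supp (fscale a c) = supp c"
  by (auto simp: supp_def)

lemma hdist_0: "hdist c 0 = card (supp c)"
  by (simp add: hdist_def supp_def)

lemma supp_vecs: "v \<in> vecs I \<Longrightarrow> supp v \<subseteq> I"
  by (auto simp: vecs_def supp_def)

locale codeC =
  fixes C :: "(nat \<Rightarrow> 'a::{field,finite}) set" and n na :: nat
  assumes sub: "module.subspace fscale C" and Cv: "C \<subseteq> vecs {..<n}"
    and d2: "\<And>x y. x\<in>C \<Longrightarrow> y\<in>C \<Longrightarrow> x\<noteq>y \<Longrightarrow> 2 \<le> hdist x y"
    and na: "\<forall>v \<in> vecs {..<n} - C. card {c\<in>C. hdist v c = 1} = na"
begin

lemma zC: "0 \<in> C" using sub V.subspace_0 by blast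

lemma finC: "finite C" using Cv finite_vecs[of "{..<n}"] finite_subset by blast

lemma fin_supp: "c \<in> C \<Longrightarrow> finite (supp c)"
  using Cv supp_vecs by (meson finite_lessThan finite_subset subsetD)

lemma w1: "c \<in> C \<Longrightarrow> card (supp c) \<le> 1 \<Longrightarrow> c = 0"
  using d2[of c 0] zC hdist_0[of c] by fastforce

lemma w1': "c \<in> C \<Longrightarrow> supp c \<subseteq> {m} \<Longrightarrow> c = 0"
  by (rule w1) (auto dest: card_mono[OF finite.intros(2)[OF finite.intros(1)]])

lemma lemA:
  assumes j: "j < n"
  shows "na = Suc (card (nbr C j))"
proof -
  define e :: "nat \<Rightarrow> 'a" where "e = (\<lambda>i. if i = j then 1 else 0)"
  have ev: "e \<in> vecs {..<n}" using j by (auto simp: vecs_def e_def)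
  have supe: "supp e = {j}" by (auto simp: supp_def e_def)
  have "e \<notin> C"
  proof
    assume "e \<in> C" then have "e = 0" using w1 supe by simp
    then have "e j = 0" by simp
    then show False by (simp add: e_def)
  qed
  with ev na have cS: "card {c\<in>C. hdist e c = 1} = na" by auto
  define T where "T = {c\<in>C. c j = 1 \<and> card (supp c) = 2}"
  have S: "{c\<in>C. hdist e c = 1} = insert 0 T"
  proof (rule set_eqI, rule iffI)
    fix c assume c: "c \<in> {c\<in>C. hdist e c = 1}"
    show "c \<in> insert 0 T"
    proof (cases "c = 0")
      case False
      from c obtain m where m: "{i. e i \<noteq> c i} = {m}" by (auto simp: hdist_def card_1_singleton_iff)
      have cC: "c \<in> C" using c by auto
      have off: "c i = e i" if "i \<noteq> m" for i
      proof -
        have "i \<notin> {i. e i \<noteq> c i}" using m that by simp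
        then show ?thesis by simp
      qed
      have cm: "c m \<noteq> e m"
      proof -
        have "m \<in> {i. e i \<noteq> c i}" using m by simp
        then show ?thesis by simp
      qed
      show ?thesis
      proof (cases "m = j")
        case True
        have "supp c \<subseteq> {j}"
        proof
          fix i assume i: "i \<in> supp c"
          show "i \<in> {j}"
          proof (rule ccontr)
            assume "i \<notin> {j}"
            then have "c i = e i" using off True by simp
            then have "c i = 0" using \<open>i \<notin> {j}\<close> by (simp add: e_def)
            then show False using i by (simp add: supp_def)
          qed
        qed
        then have "c = 0" using w1' cC by blast
        then show ?thesis using False by simp
      next
        case mj: False
        have cj1: "c j = 1" using off[of j] mj by (simp add: e_def)
        have cm0: "c m \<noteq> 0" using cm mj by (simp add: e_def)
        have "supp c = {j,m}"
        proof (rule set_eqI)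
          fix i
          show "i \<in> supp c \<longleftrightarrow> i \<in> {j,m}"
          proof (cases "i = j \<or> i = m")
            case True then show ?thesis using cj1 cm0 by (auto simp: supp_def)
          next
            case False
            then have "c i = e i" using off by simp
            then have "c i = 0" using False by (simp add: e_def)
            then show ?thesis using False by (simp add: supp_def)
          qed
        qed
        moreover have "c j = 1" using off[of j] mj by (simp add: e_def)
        ultimately show ?thesis using cC mj by (simp add: T_def)
      qed
    qed simp
  next
    fix c assume "c \<in> insert 0 T"
    then show "c \<in> {c\<in>C. hdist e c = 1}"
    proof
      assume "c = 0" then show ?thesis using zC hdist_0[of e] supe by simp
    next
      assume "c \<in> T"
      then obtain x y where xy: "supp c = {x,y}" "x \<noteq> y" and cC: "c \<in> C" and cj: "c j = 1"
        by (auto simp: T_def card_2_iff)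
      have "j \<in> supp c" using cj by (simp add: supp_def)
      then obtain m where m: "supp c = {j,m}" "m \<noteq> j" using xy by auto
      have "{i. e i \<noteq> c i} = {m}"
      proof (rule set_eqI)
        fix i
        show "i \<in> {i. e i \<noteq> c i} \<longleftrightarrow> i \<in> {m}"
        proof (cases "i = j")
          case True then show ?thesis using cj m by (simp add: e_def)
        next
          case False
          then have "e i = 0" by (simp add: e_def)
          moreover have "c i \<noteq> 0 \<longleftrightarrow> i = m" using m False by (auto simp: supp_def set_eq_iff)
          ultimately show ?thesis by auto
        qed
      qed
      then show ?thesis using cC by (simp add: hdist_def)
    qed
  qed
  have finT: "finite T" using finC by (simp add: T_def)
  have "0 \<notin> T" by (simp add: T_def)
  then have "na = Suc (card T)" using cS S finT by simp
  moreover have "bij_betw (\<lambda>c. the_elem (supp c - {j})) T (nbr C j)"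
  proof (rule bij_betw_imageI)
    have rep: "\<exists>m. m \<noteq> j \<and> supp c = {j,m}" if "c \<in> T" for c
    proof -
      from that obtain x y where xy: "supp c = {x,y}" "x \<noteq> y" and cj: "c j = 1"
        by (auto simp: T_def card_2_iff)
      have "j \<in> supp c" using cj by (simp add: supp_def)
      then show ?thesis using xy by auto
    qed
    show "inj_on (\<lambda>c. the_elem (supp c - {j})) T"
    proof (rule inj_onI)
      fix c c' assume c: "c \<in> T" and c': "c' \<in> T" and eq: "the_elem (supp c - {j}) = the_elem (supp c' - {j})"
      obtain m where m: "m \<noteq> j" "supp c = {j,m}" using rep[OF c] by blast
      obtain m' where m': "m' \<noteq> j" "supp c' = {j,m'}" using rep[OF c'] by blast
      have "supp c - {j} = {m}" "supp c' - {j} = {m'}" using m m' by auto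
      with eq have mm: "m' = m" by simp
      have cj: "c j = 1" "c' j = 1" using c c' by (auto simp: T_def)
      have "{i. c i \<noteq> c' i} \<subseteq> {m}"
      proof
        fix i assume i: "i \<in> {i. c i \<noteq> c' i}"
        show "i \<in> {m}"
        proof (rule ccontr)
          assume "i \<notin> {m}"
          moreover have "i \<noteq> j" using i cj by auto
          ultimately have "i \<notin> supp c" "i \<notin> supp c'" using m m' mm by auto
          then show False using i by (simp add: supp_def)
        qed
      qed
      then have "card {i. c i \<noteq> c' i} \<le> card {m}" by (intro card_mono) simp_all
      then have "hdist c c' \<le> 1" by (simp add: hdist_def)
      then show "c = c'" using d2[of c c'] c c' by (auto simp: T_def)
    qed
    show "(\<lambda>c. the_elem (supp c - {j})) ` T = nbr C j"
    proof
      show "(\<lambda>c. the_elem (supp c - {j})) ` T \<subseteq> nbr C j"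
      proof
        fix x assume "x \<in> (\<lambda>c. the_elem (supp c - {j})) ` T"
        then obtain c where c: "c \<in> T" and x: "x = the_elem (supp c - {j})" by blast
        obtain m where m: "m \<noteq> j" "supp c = {j,m}" using rep[OF c] by blast
        have "supp c - {j} = {m}" using m by auto
        then have "x = m" using x by simp
        then show "x \<in> nbr C j" using m c by (auto simp: nbr_def T_def insert_commute)
      qed
    next
      show "nbr C j \<subseteq> (\<lambda>c. the_elem (supp c - {j})) ` T"
      proof
        fix i assume "i \<in> nbr C j"
        then obtain c where c: "c \<in> C" "supp c = {i,j}" and ij: "i \<noteq> j" by (auto simp: nbr_def)
        have cj0: "c j \<noteq> 0" using c by (auto simp: supp_def)
        define c' where "c' = fscale (inverse (c j)) c"
        have sc': "supp c' = {i,j}" using supp_fscale[of "inverse (c j)" c] cj0 c by (simp add: c'_def)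
        have c'C: "c' \<in> C" using V.subspace_scale[OF sub c(1)] by (simp add: c'_def)
        have "c' j = 1" using cj0 by (simp add: c'_def)
        then have c'T: "c' \<in> T" using sc' c'C ij by (simp add: T_def)
        have e1: "supp c' - {j} = {i}" using sc' ij by auto
        show "i \<in> (\<lambda>c. the_elem (supp c - {j})) ` T"
          by (rule image_eqI[where x=c']) (simp_all add: e1 c'T)
      qed
    qed
  qed
  ultimately show ?thesis by (simp add: bij_betw_same_card)
qed

end



definition Gv :: "(nat \<Rightarrow> nat) \<Rightarrow> nat \<Rightarrow> (nat \<Rightarrow> 'a::field) \<Rightarrow> nat \<Rightarrow> nat \<Rightarrow> 'a" where
  "Gv \<sigma> na h = (\<lambda>r. \<lambda>p. if p \<in> \<sigma> ` {..<na - 1} then (if p = \<sigma> r then 1 else 0)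
                             else if p = \<sigma> (na - 1) then h r else 0)"

locale codeP = codeC +
  fixes P :: "nat set set"
  assumes Pcover: "\<Union>P = {..<n}"
    and Pdisj: "\<forall>X\<in>P. \<forall>Y\<in>P. X \<noteq> Y \<longrightarrow> X \<inter> Y = {}"
    and Pcard: "\<forall>X\<in>P. card X = na"
    and Pwt2: "\<forall>c\<in>C. wt c = 2 \<longrightarrow> (\<exists>X\<in>P. supp c \<subseteq> X)"
    and w2ex: "\<exists>c\<in>C. card (supp c) = 2"
begin

lemma nbr_sub: "nbr C j \<subseteq> {..<n}"
  using Cv supp_vecs by (fastforce simp: nbr_def)

lemma lemB:
  assumes X: "X \<in> P" and jX: "j \<in> X"
  shows "X = insert j (nbr C j)"
proof -
  have j: "j < n" using Pcover X jX by auto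
  have "nbr C j \<subseteq> X"
  proof
    fix i assume "i \<in> nbr C j"
    then obtain c where c: "c \<in> C" "supp c = {i,j}" and ij: "i \<noteq> j" by (auto simp: nbr_def)
    have "wt c = 2" using c ij by (simp add: wt_def)
    then obtain Y where Y: "Y \<in> P" "supp c \<subseteq> Y" using Pwt2 c by blast
    then have "j \<in> Y" "i \<in> Y" using c by auto
    then have "Y = X" using Pdisj X Y jX by blast
    then show "i \<in> X" using \<open>i \<in> Y\<close> by simp
  qed
  then have sub: "insert j (nbr C j) \<subseteq> X" using jX by simp
  have "finite (nbr C j)" using nbr_sub finite_subset by blast
  moreover have "j \<notin> nbr C j" by (simp add: nbr_def)
  ultimately have "card (insert j (nbr C j)) = card X" using lemA[OF j] Pcard X by simp
  moreover have "finite X" using Pcover X by (metis Union_upper finite_lessThan finite_subset)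
  ultimately show ?thesis using sub card_subset_eq by blast
qed

lemma na2: "2 \<le> na"
proof -
  obtain c where c: "c \<in> C" "card (supp c) = 2" using w2ex by blast
  then obtain a b where ab: "supp c = {a,b}" "a \<noteq> b" by (auto simp: card_2_iff)
  have "b < n" using Cv c ab supp_vecs by fastforce
  have "a \<in> nbr C b" using ab c by (auto simp: nbr_def)
  moreover have "finite (nbr C b)" using nbr_sub finite_subset by blast
  ultimately have "card (nbr C b) \<ge> 1" by (metis One_nat_def Suc_leI card_gt_0_iff empty_iff)
  then show ?thesis using lemA[OF \<open>b < n\<close>] by simp
qed

lemma exstruct:
  assumes X: "X \<in> P"
  shows "\<exists>\<sigma> h. bij_betw \<sigma> {..<na} X \<and> (\<forall>r<na - 1. h r \<noteq> 0 \<and> Gv \<sigma> na h r \<in> C)"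
proof -
  have finX: "finite X" using Pcover X by (metis Union_upper finite_lessThan finite_subset)
  have "X \<noteq> {}" using Pcard X na2 by auto
  then obtain l where l: "l \<in> X" by blast
  have Xl: "X - {l} = nbr C l" using lemB[OF X l] by (auto simp: nbr_def)
  have cXl: "card (X - {l}) = na - 1" using Pcard X l finX by simp
  obtain \<tau> where \<tau>: "bij_betw \<tau> {..<na-1} (X - {l})"
    using ex_bij_betw_nat_finite[of "X - {l}"] finX cXl by (auto simp: atLeast0LessThan)
  define \<sigma> where "\<sigma> = (\<lambda>x. if x \<in> {..<na-1} then \<tau> x else l)"
  have "bij_betw \<sigma> ({..<na-1} \<union> {na-1}) ((X - {l}) \<union> {l})"
    unfolding \<sigma>_def by (rule bij_betw_disjoint_Un[OF \<tau>]) auto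
  moreover have "{..<na-1} \<union> {na-1} = {..<na}" using na2 by auto
  moreover have "(X - {l}) \<union> {l} = X" using l by auto
  ultimately have bij: "bij_betw \<sigma> {..<na} X" by simp
  have sl: "\<sigma> (na - 1) = l" by (simp add: \<sigma>_def)
  have simg: "\<sigma> ` {..<na-1} = X - {l}" using \<tau> by (simp add: \<sigma>_def bij_betw_def)
  have sinj: "inj_on \<sigma> {..<na}" using bij by (simp add: bij_betw_def)
  have exc: "\<exists>c. c \<in> C \<and> supp c = {\<sigma> r, l} \<and> c (\<sigma> r) = 1" if r: "r < na - 1" for r
  proof -
    have "\<sigma> r \<in> nbr C l" using simg r Xl by auto
    then obtain c where c: "c \<in> C" "supp c = {\<sigma> r, l}" by (auto simp: nbr_def)
    have cj0: "c (\<sigma> r) \<noteq> 0" using c by (auto simp: supp_def)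
    define c' where "c' = fscale (inverse (c (\<sigma> r))) c"
    have "supp c' = {\<sigma> r, l}" using supp_fscale[of "inverse (c (\<sigma> r))" c] cj0 c by (simp add: c'_def)
    moreover have "c' \<in> C" using V.subspace_scale[OF sub c(1)] by (simp add: c'_def)
    moreover have "c' (\<sigma> r) = 1" using cj0 by (simp add: c'_def)
    ultimately show ?thesis by blast
  qed
  define g where "g r = (SOME c. c \<in> C \<and> supp c = {\<sigma> r, l} \<and> c (\<sigma> r) = 1)" for r
  have g: "g r \<in> C \<and> supp (g r) = {\<sigma> r, l} \<and> g r (\<sigma> r) = 1" if "r < na - 1" for r
    unfolding g_def using someI_ex[OF exc[OF that]] .
  define h where "h r = g r l" for r
  have "h r \<noteq> 0 \<and> Gv \<sigma> na h r \<in> C" if r: "r < na - 1" for r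
  proof -
    have "h r \<noteq> 0" using g[OF r] by (auto simp: h_def supp_def)
    moreover have "Gv \<sigma> na h r = g r"
    proof
      fix p
      have z: "g r p = 0" if "p \<noteq> \<sigma> r" "p \<noteq> l" using g[OF r] that by (auto simp: supp_def)
      have srl: "\<sigma> r \<noteq> l" using simg r by auto
      have srimg: "\<sigma> r \<in> \<sigma> ` {..<na-1}" using r by blast
      show "Gv \<sigma> na h r p = g r p"
      proof (cases "p \<in> \<sigma> ` {..<na-1}")
        case True
        then have "p \<noteq> l" using simg by auto
        then show ?thesis using True z g[OF r] by (simp add: Gv_def)
      next
        case False
        show ?thesis
        proof (cases "p = l")
          case True
          have sl': "\<sigma> (na - Suc 0) = l" using sl by simp
          show ?thesis using False True sl' by (simp add: Gv_def h_def)
        next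
          case pl: False
          have "p \<noteq> \<sigma> r" using False srimg by blast
          then show ?thesis using False pl sl z by (simp add: Gv_def)
        qed
      qed
    qed
    ultimately show ?thesis using g[OF r] by simp
  qed
  note hh = this
  show ?thesis
    apply (rule exI[of _ \<sigma>], rule exI[of _ h])
    using bij hh by simp
qed

end



locale structX = codeC +
  fixes X :: "nat set" and \<sigma> :: "nat \<Rightarrow> nat" and h :: "nat \<Rightarrow> 'a::{field,finite}"
  assumes finX: "finite X" and bij: "bij_betw \<sigma> {..<na} X" and na2: "2 \<le> na"
    and hG: "\<forall>r<na - 1. h r \<noteq> 0 \<and> Gv \<sigma> na h r \<in> C"
begin

abbreviation "m \<equiv> na - 1"
abbreviation "l \<equiv> \<sigma> (na - 1)"
abbreviation "G \<equiv> Gv \<sigma> na h"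
definition "f v = v l - (\<Sum>r<m. v (\<sigma> r) * h r)"
definition "D = {c\<in>C. supp c \<subseteq> X}"

lemma sinj: "inj_on \<sigma> {..<na}" using bij by (simp add: bij_betw_def)
lemma simg: "\<sigma> ` {..<na} = X" using bij by (simp add: bij_betw_def)
lemma lX: "l \<in> X" using simg na2 by force
lemma sX: "r < m \<Longrightarrow> \<sigma> r \<in> X" using simg by force
lemma snl: "r < m \<Longrightarrow> \<sigma> r \<noteq> l"
proof
  assume r: "r < m" and e: "\<sigma> r = l"
  have "r \<in> {..<na}" "na - 1 \<in> {..<na}" using r na2 by auto
  then have "r = na - 1" using inj_onD[OF sinj e] by blast
  then show False using r by simp
qed
lemma seq: "r < m \<Longrightarrow> s < m \<Longrightarrow> \<sigma> r = \<sigma> s \<longleftrightarrow> r = s" using sinj by (auto dest: inj_onD)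
lemma ximg: "X = insert l (\<sigma> ` {..<m})"
proof -
  have "{..<na} = insert m {..<m}" using na2 by auto
  then show ?thesis using simg by auto
qed

lemma G_s: "r < m \<Longrightarrow> s < m \<Longrightarrow> G r (\<sigma> s) = (if r = s then 1 else 0)"
  unfolding Gv_def using seq by auto
lemma lnimg: "l \<notin> \<sigma> ` {..<m}" using snl by force
lemma G_l: "G r l = h r"
  unfolding Gv_def using lnimg by simp
lemma G_out: "p \<notin> X \<Longrightarrow> G r p = 0"
  unfolding Gv_def using ximg by auto
lemma GC: "r < m \<Longrightarrow> G r \<in> C" using hG by auto
lemma hnz: "r < m \<Longrightarrow> h r \<noteq> 0" using hG by auto

lemma decomp:
  assumes v: "v \<in> vecs X"
  shows "v = (\<Sum>r<m. fscale (v (\<sigma> r)) (G r)) + (\<lambda>p. if p = l then f v else 0)"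
proof
  fix p
  have L: "(\<Sum>r<m. fscale (v (\<sigma> r)) (G r)) p = (\<Sum>r<m. v (\<sigma> r) * G r p)"
    by (simp add: fun_sum_apply)
  show "v p = ((\<Sum>r<m. fscale (v (\<sigma> r)) (G r)) + (\<lambda>p. if p = l then f v else 0)) p"
  proof (cases "p \<in> X")
    case False
    then show ?thesis using v L G_out lX by (auto simp: vecs_def)
  next
    case True
    show ?thesis
    proof (cases "p = l")
      case True
      then show ?thesis using L G_l by (simp add: f_def)
    next
      case False
      then obtain s where s: "s < m" "p = \<sigma> s" using True ximg by auto
      have "(\<Sum>r<m. v (\<sigma> r) * G r p) = (\<Sum>r<m. if r = s then v (\<sigma> s) else 0)"
      proof (rule sum.cong)
        fix r assume "r \<in> {..<m}"
        then have "G r p = (if r = s then 1 else 0)" using G_s[of r s] s by simp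
        then show "v (\<sigma> r) * G r p = (if r = s then v (\<sigma> s) else 0)" by simp
      qed simp
      also have "\<dots> = v (\<sigma> s)" using s by simp
      finally show ?thesis using L False s by simp
    qed
  qed
qed

lemma decomp0:
  assumes v: "v \<in> vecs X" and f0: "f v = 0"
  shows "v = (\<Sum>r<m. fscale (v (\<sigma> r)) (G r))"
proof -
  have "(\<lambda>p. if p = l then f v else (0::'a)) = 0" using f0 by (simp add: fun_eq_iff)
  then show ?thesis using decomp[OF v] by simp
qed

lemma f_lin: "f (\<lambda>p. y p + c * (u p - x p)) = f y + c * (f u - f x)"
  unfolding f_def by (simp add: algebra_simps sum.distrib sum_subtractf sum_distrib_left)

lemma sumC: "(\<Sum>r<m. fscale (a r) (G r)) \<in> C"
  by (rule V.subspace_sum[OF sub]) (simp add: V.subspace_scale[OF sub] GC)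

lemma sum_vecs: "(\<Sum>r<m. fscale (a r) (G r)) \<in> vecs X"
  by (auto simp: vecs_def fun_sum_apply G_out)

lemma Dchar: "D = {v \<in> vecs X. f v = 0}"
proof (rule set_eqI, rule iffI)
  fix v assume "v \<in> D"
  then have vC: "v \<in> C" and vX: "v \<in> vecs X" by (auto simp: D_def vecs_def supp_def)
  let ?u = "(\<lambda>p. if p = l then f v else (0::'a))"
  have "?u = v - (\<Sum>r<m. fscale (v (\<sigma> r)) (G r))" using decomp[OF vX] by (simp add: algebra_simps)
  then have "?u \<in> C" using V.subspace_diff[OF sub vC sumC] by simp
  moreover have "supp ?u \<subseteq> {l}" by (auto simp: supp_def)
  ultimately have "?u = 0" using w1' by blast
  then have "f v = 0" using fun_cong[of ?u 0 l] by simp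
  then show "v \<in> {v \<in> vecs X. f v = 0}" using vX by simp
next
  fix v assume "v \<in> {v \<in> vecs X. f v = 0}"
  then have vX: "v \<in> vecs X" and f0: "f v = 0" by auto
  have "v = (\<Sum>r<m. fscale (v (\<sigma> r)) (G r))" using decomp0[OF vX f0] .
  then have "v \<in> C" using sumC by metis
  then show "v \<in> D" using vX supp_vecs by (auto simp: D_def)
qed

lemma D_vecs: "D \<subseteq> vecs X" using Dchar by auto
lemma D_C: "D \<subseteq> C" by (auto simp: D_def)
lemma finD: "finite D" using D_C finC finite_subset by blast
lemma zD: "0 \<in> D" using zC by (simp add: D_def supp_def)

lemma subD: "module.subspace fscale D"
  unfolding D_def
proof -
  have "{c\<in>C. supp c \<subseteq> X} = C \<inter> vecs X" by (auto simp: vecs_def supp_def)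
  moreover have "module.subspace fscale (vecs X :: (nat \<Rightarrow> 'a) set)"
    by (auto simp: V.subspace_def vecs_def)
  ultimately show "module.subspace fscale {c\<in>C. supp c \<subseteq> X}" using V.subspace_inter[OF sub] by simp
qed

lemma GD: "r < m \<Longrightarrow> G r \<in> D"
  using GC G_out by (auto simp: D_def supp_def)

lemma Dspan: "D = module.span fscale (G ` {..<m})"
proof
  show "D \<subseteq> module.span fscale (G ` {..<m})"
  proof
    fix v assume "v \<in> D"
    then have vX: "v \<in> vecs X" and f0: "f v = 0" using Dchar by auto
    have "v = (\<Sum>r<m. fscale (v (\<sigma> r)) (G r))" using decomp0[OF vX f0] .
    moreover have "(\<Sum>r<m. fscale (v (\<sigma> r)) (G r)) \<in> module.span fscale (G ` {..<m})"
      by (intro V.span_sum V.span_scale V.span_base) auto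
    ultimately show "v \<in> module.span fscale (G ` {..<m})" by simp
  qed
  show "module.span fscale (G ` {..<m}) \<subseteq> D"
    by (rule V.span_minimal[OF _ subD]) (auto intro: GD)
qed

lemma Ginj: "inj_on G {..<m}"
proof (rule inj_onI)
  fix r s assume r: "r \<in> {..<m}" and s: "s \<in> {..<m}" and eq: "G r = G s"
  have "G r (\<sigma> r) = 1" "G s (\<sigma> r) = (if s = r then 1 else 0)" using r s G_s by auto
  then have "(if s = r then 1 else 0) = (1::'a)" using eq by simp
  then show "r = s" by (cases "s = r") simp_all
qed

lemma indep: "\<not> module.dependent fscale (G ` {..<m})"
proof -
  have "u (G s) = 0" if "(\<Sum>v\<in>G ` {..<m}. fscale (u v) v) = 0" and s: "s < m" for u s
  proof -
    have "(\<Sum>v\<in>G ` {..<m}. fscale (u v) v) = (\<Sum>r<m. fscale (u (G r)) (G r))"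
      using sum.reindex[OF Ginj] by simp
    then have "(\<Sum>r<m. fscale (u (G r)) (G r)) (\<sigma> s) = 0" using that by simp
    then have "(\<Sum>r<m. u (G r) * G r (\<sigma> s)) = 0" by (simp add: fun_sum_apply)
    moreover have "(\<Sum>r<m. u (G r) * G r (\<sigma> s)) = (\<Sum>r<m. if r = s then u (G s) else 0)"
    proof (rule sum.cong)
      fix r assume "r \<in> {..<m}"
      then have "G r (\<sigma> s) = (if r = s then 1 else 0)" using G_s[of r s] s by simp
      then show "u (G r) * G r (\<sigma> s) = (if r = s then u (G s) else 0)" by simp
    qed simp
    ultimately show ?thesis using s by simp
  qed
  then show ?thesis
    by (subst V.dependent_finite) (auto)
qed

end



context structX begin

lemma m_pos: "0 < m" using na2 by simp

lemma dimD: "code_dim D = m"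
proof -
  have "code_dim D = V.dim (G ` {..<m})" unfolding code_dim_def Dspan by simp
  also have "\<dots> = card (G ` {..<m})"
    using V.dim_span_eq_card_independent[OF indep] by simp
  also have "\<dots> = m" using card_image[OF Ginj] by simp
  finally show ?thesis .
qed

lemma suppG0: "supp (G 0) \<subseteq> {\<sigma> 0, l}"
proof
  fix p assume p: "p \<in> supp (G 0)"
  then have nz: "G 0 p \<noteq> 0" by (simp add: supp_def)
  show "p \<in> {\<sigma> 0, l}"
  proof (cases "p \<in> X")
    case False then show ?thesis using nz G_out by simp
  next
    case True
    show ?thesis
    proof (cases "p = l")
      case False
      then obtain s where s: "s < m" "p = \<sigma> s" using True ximg by auto
      then have "G 0 p = (if 0 = s then 1 else 0)" using G_s[of 0 s] m_pos by simp
      then have "s = 0" using nz by (cases "s = 0") simp_all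
      then show ?thesis using s by simp
    qed simp
  qed
qed

lemma G0nz: "G 0 \<noteq> 0"
proof
  assume "G 0 = 0"
  then have "G 0 (\<sigma> 0) = 0" by simp
  then show False using G_s[of 0 0] m_pos by simp
qed

lemma mindD: "min_dist D = 2"
  unfolding min_dist_def
proof (rule Min_eqI)
  let ?S = "{hdist x y |x y. x \<in> D \<and> y \<in> D \<and> x \<noteq> y}"
  have "?S \<subseteq> (\<lambda>(x,y). hdist x y) ` (D \<times> D)" by auto
  then show "finite ?S" using finD finite_subset by blast
  show "2 \<le> y" if "y \<in> ?S" for y using that d2 D_C by auto
  have "hdist (G 0) 0 \<le> 2"
  proof -
    have "card (supp (G 0)) \<le> card {\<sigma> 0, l}" by (rule card_mono[OF _ suppG0]) simp
    also have "\<dots> \<le> 2" by (simp add: card_insert_le_m1)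
    finally show ?thesis by (simp add: hdist_0)
  qed
  moreover have "2 \<le> hdist (G 0) 0" using d2[of "G 0" 0] GC[OF m_pos] zC G0nz by simp
  ultimately have "hdist (G 0) 0 = 2" by simp
  then show "2 \<in> ?S" using GD[OF m_pos] zD G0nz by force
qed

lemma dt_le1:
  assumes v: "v \<in> vecs X" shows "dist_to v D \<le> 1"
proof -
  let ?c = "(\<Sum>r<m. fscale (v (\<sigma> r)) (G r))"
  have cD: "?c \<in> D" using sumC supp_vecs[OF sum_vecs] by (simp add: D_def)
  have "{p. v p \<noteq> ?c p} \<subseteq> {l}"
  proof
    fix p assume "p \<in> {p. v p \<noteq> ?c p}"
    then have "v p \<noteq> ?c p" by simp
    moreover have "v p = ?c p + (if p = l then f v else 0)" using fun_cong[OF decomp[OF v], of p] by simp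
    ultimately show "p \<in> {l}" by (cases "p = l") simp_all
  qed
  then have "card {p. v p \<noteq> ?c p} \<le> card {l}" by (intro card_mono) simp_all
  then have "hdist v ?c \<le> 1" by (simp add: hdist_def)
  moreover have "dist_to v D \<le> hdist v ?c" unfolding dist_to_def using finD cD by (intro Min_le) auto
  ultimately show ?thesis by simp
qed

lemma dt0:
  assumes v: "v \<in> vecs X" shows "dist_to v D = 0 \<longleftrightarrow> v \<in> D"
proof
  assume "v \<in> D"
  then have "dist_to v D \<le> hdist v v" unfolding dist_to_def using finD by (intro Min_le) auto
  then show "dist_to v D = 0" by (simp add: hdist_def)
next
  assume d: "dist_to v D = 0"
  have "dist_to v D \<in> hdist v ` D" unfolding dist_to_def using finD zD by (intro Min_in) auto
  then obtain c where c: "c \<in> D" "hdist v c = 0" using d by auto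
  then have "v = c" using hdist_0_iff[OF finX v] D_vecs by auto
  then show "v \<in> D" using c by simp
qed

lemma covD: "cov_radius X D = 1"
  unfolding cov_radius_def
proof (rule Max_eqI)
  show "finite ((\<lambda>v. dist_to v D) ` vecs X)" by (rule finite_imageI[OF finite_vecs[OF finX]])
  show "y \<le> 1" if "y \<in> (\<lambda>v. dist_to v D) ` vecs X" for y using that dt_le1 by auto
  define v0 :: "nat \<Rightarrow> 'a" where "v0 = (\<lambda>p. if p = l then 1 else 0)"
  have v0X: "v0 \<in> vecs X" using lX by (auto simp: vecs_def v0_def)
  have "(\<Sum>r<m. v0 (\<sigma> r) * h r) = 0" using snl by (simp add: v0_def)
  then have "f v0 = 1" by (simp add: f_def v0_def)
  then have "v0 \<notin> D" using Dchar by simp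
  then have "dist_to v0 D \<noteq> 0" using dt0[OF v0X] by simp
  then have "dist_to v0 D = 1" using dt_le1[OF v0X] by simp
  then show "1 \<in> (\<lambda>v. dist_to v D) ` vecs X" using v0X by force
qed

lemma crD: "completely_regular X D"
  unfolding completely_regular_def
proof (intro ballI impI allI)
  fix x y i assume x: "x \<in> vecs X" and y: "y \<in> vecs X" and eqd: "dist_to x D = dist_to y D"
  have fxy: "f x = 0 \<longleftrightarrow> f y = 0" using dt0[OF x] dt0[OF y] eqd Dchar x y by auto
  define lam where "lam = (if f x = 0 then 1 else f y / f x)"
  have lnz: "lam \<noteq> 0" using fxy by (simp add: lam_def)
  have fyl: "f y = lam * f x" using fxy by (simp add: lam_def)
  define \<phi> where "\<phi> c = (\<lambda>p. y p + lam * (c p - x p))" for c :: "nat \<Rightarrow> 'a"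
  define \<psi> where "\<psi> c = (\<lambda>p. x p + inverse lam * (c p - y p))" for c :: "nat \<Rightarrow> 'a"
  have \<phi>D: "\<phi> c \<in> D" if c: "c \<in> D" for c
  proof -
    have cX: "c \<in> vecs X" and fc: "f c = 0" using c Dchar by auto
    have "\<phi> c \<in> vecs X" using x y cX by (simp add: vecs_def \<phi>_def)
    moreover have "f (\<phi> c) = 0" unfolding \<phi>_def f_lin using fc fyl by simp
    ultimately show ?thesis using Dchar by simp
  qed
  have \<psi>D: "\<psi> c \<in> D" if c: "c \<in> D" for c
  proof -
    have cX: "c \<in> vecs X" and fc: "f c = 0" using c Dchar by auto
    have "\<psi> c \<in> vecs X" using x y cX by (simp add: vecs_def \<psi>_def)
    moreover have "f (\<psi> c) = 0" unfolding \<psi>_def f_lin using fc fyl lnz by simp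
    ultimately show ?thesis using Dchar by simp
  qed
  have h\<phi>: "hdist y (\<phi> c) = hdist x c" for c
  proof -
    have "{p. y p \<noteq> \<phi> c p} = {p. x p \<noteq> c p}" using lnz by (auto simp: \<phi>_def)
    then show ?thesis by (simp add: hdist_def)
  qed
  have h\<psi>: "hdist x (\<psi> c) = hdist y c" for c
  proof -
    have "{p. x p \<noteq> \<psi> c p} = {p. y p \<noteq> c p}" using lnz by (auto simp: \<psi>_def)
    then show ?thesis by (simp add: hdist_def)
  qed
  have \<psi>\<phi>: "\<psi> (\<phi> c) = c" for c using lnz by (simp add: \<phi>_def \<psi>_def fun_eq_iff mult.assoc[symmetric])
  have \<phi>\<psi>: "\<phi> (\<psi> c) = c" for c using lnz by (simp add: \<phi>_def \<psi>_def fun_eq_iff mult.assoc[symmetric])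
  have "bij_betw \<phi> {c\<in>D. hdist x c = i} {c\<in>D. hdist y c = i}"
    by (rule bij_betw_byWitness[where f'=\<psi>]) (auto simp: \<psi>\<phi> \<phi>\<psi> \<phi>D \<psi>D h\<phi> h\<psi>)
  then show "card {c\<in>D. hdist x c = i} = card {c\<in>D. hdist y c = i}" by (rule bij_betw_same_card)
qed

end




theorem corollary3p7:
  fixes C :: "(nat \<Rightarrow> 'a::{field,finite}) set" and n k na :: nat and P :: "nat set set"
  assumes lin: "linear_code {..<n} C"
    and dimC: "code_dim C = k"
    and dC: "min_dist C = 2"
    and cr: "completely_regular {..<n} C"
    and rho: "cov_radius {..<n} C = 1"
    and kn: "k < n - 1"
    and na: "\<forall>v \<in> vecs {..<n} - C. card {c\<in>C. hdist v c = 1} = na"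
    and Pcover: "\<Union>P = {..<n}"
    and Pdisj: "\<forall>X\<in>P. \<forall>Y\<in>P. X \<noteq> Y \<longrightarrow> X \<inter> Y = {}"
    and Pcard: "\<forall>X\<in>P. card X = na"
    and Pwt2: "\<forall>c\<in>C. wt c = 2 \<longrightarrow> (\<exists>X\<in>P. supp c \<subseteq> X)"
  shows "\<forall>X\<in>P.
           linear_code X (shortened C X)
         \<and> completely_regular X (shortened C X)
         \<and> card X = na
         \<and> code_dim (shortened C X) = na - 1
         \<and> min_dist (shortened C X) = 2
         \<and> cov_radius X (shortened C X) = 1
         \<and> (\<exists>\<sigma> h. bij_betw \<sigma> {..<na} X
               \<and> (\<forall>r<na - 1. h r \<noteq> (0::'a))
               \<and> shortened C X = module.span fscale
                   ((\<lambda>r. \<lambda>p. if p \<in> \<sigma> ` {..<na - 1} then (if p = \<sigma> r then 1 else 0)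
                             else if p = \<sigma> (na - 1) then h r else 0) ` {..<na - 1}))"
proof -
  have sub: "module.subspace fscale C" and Cv: "C \<subseteq> vecs {..<n}" using lin by (auto simp: linear_code_def)
  let ?S = "{hdist x y |x y. x \<in> C \<and> y \<in> C \<and> x \<noteq> y}"
  have finS: "finite ?S"
  proof (rule finite_subset)
    show "?S \<subseteq> {..n}" using Cv hdist_le[of "{..<n}"] by fastforce
  qed simp
  have d2: "2 \<le> hdist x y" if "x \<in> C" "y \<in> C" "x \<noteq> y" for x y
  proof -
    have "min_dist C \<le> hdist x y" unfolding min_dist_def using finS that by (intro Min_le) auto
    then show ?thesis using dC by simp
  qed
  have zC: "0 \<in> C" using sub V.subspace_0 by blast
  have n2: "2 \<le> n" using kn by simp
  have "C \<noteq> {0}"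
  proof
    assume C0: "C = {0}"
    define v1 :: "nat \<Rightarrow> 'a" where "v1 = (\<lambda>j. if j < n then 1 else 0)"
    have v1v: "v1 \<in> vecs {..<n}" by (simp add: vecs_def v1_def)
    have "supp v1 = {..<n}" by (auto simp: supp_def v1_def)
    then have "dist_to v1 C = n" using C0 hdist_0[of v1] by (simp add: dist_to_def)
    moreover have "dist_to v1 C \<le> cov_radius {..<n} C" unfolding cov_radius_def
      using v1v by (intro Max_ge finite_imageI finite_vecs) auto
    ultimately show False using rho n2 by simp
  qed
  then obtain x0 where x0: "x0 \<in> C" "x0 \<noteq> 0" using zC by blast
  have "?S \<noteq> {}" using x0 zC by blast
  then have "min_dist C \<in> ?S" unfolding min_dist_def using finS by (intro Min_in) auto
  then obtain x y where xy: "x \<in> C" "y \<in> C" "x \<noteq> y" "hdist x y = 2" using dC by auto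
  have "x - y \<in> C" using V.subspace_diff[OF sub xy(1,2)] .
  moreover have "supp (x - y) = {j. x j \<noteq> y j}" by (simp add: supp_def)
  ultimately have w2ex: "\<exists>c\<in>C. card (supp c) = 2" using xy(4) unfolding hdist_def by metis
  interpret codeP C n na P
    by unfold_locales (use sub Cv d2 na Pcover Pdisj Pcard Pwt2 w2ex in auto)
  show ?thesis
  proof
    fix X assume X: "X \<in> P"
    have finX: "finite X" using Pcover X by (metis Union_upper finite_lessThan finite_subset)
    obtain \<sigma> h where bij: "bij_betw \<sigma> {..<na} X" and hG: "\<forall>r<na - 1. h r \<noteq> 0 \<and> Gv \<sigma> na h r \<in> C"
      using exstruct[OF X] by blast
    interpret structX C n na X \<sigma> h
      by unfold_locales (use finX bij na2 hG in auto)
    have sh: "shortened C X = D"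
    proof -
      have "\<And>c. c \<in> {c\<in>C. supp c \<subseteq> X} \<Longrightarrow> (\<lambda>j. if j \<in> X then c j else 0) = c"
        by (auto simp: supp_def fun_eq_iff)
      then have "shortened C X = (\<lambda>c. c) ` {c\<in>C. supp c \<subseteq> X}"
        unfolding shortened_def by (rule image_cong[OF refl])
      then show ?thesis by (simp add: D_def)
    qed
    have lc: "linear_code X D" using D_vecs subD by (simp add: linear_code_def)
    have sp: "D = module.span fscale
                   ((\<lambda>r. \<lambda>p. if p \<in> \<sigma> ` {..<na - 1} then (if p = \<sigma> r then 1 else 0)
                             else if p = \<sigma> (na - 1) then h r else 0) ` {..<na - 1})"
      using Dspan by (simp add: Gv_def)
    have hnz': "\<forall>r<na - 1. h r \<noteq> (0::'a)" using hnz by blast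
    show "linear_code X (shortened C X)
         \<and> completely_regular X (shortened C X)
         \<and> card X = na
         \<and> code_dim (shortened C X) = na - 1
         \<and> min_dist (shortened C X) = 2
         \<and> cov_radius X (shortened C X) = 1
         \<and> (\<exists>\<sigma> h. bij_betw \<sigma> {..<na} X
               \<and> (\<forall>r<na - 1. h r \<noteq> (0::'a))
               \<and> shortened C X = module.span fscale
                   ((\<lambda>r. \<lambda>p. if p \<in> \<sigma> ` {..<na - 1} then (if p = \<sigma> r then 1 else 0)
                             else if p = \<sigma> (na - 1) then h r else 0) ` {..<na - 1}))"
      unfolding sh using lc crD Pcard X dimD mindD covD bij hnz' sp by blast
  qed
qed



end
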